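(* Let $T$, $\mathcal{J}=\langle N,B\rangle$, an allocation $(\mathcal{C}_s,\mathcal{B}_s)$, a node $v$ and a scenario $\sigma$ be as in the context. If $T_v$ can offer more than $N$ working VMs in scenario $\sigma$, then $T_v$ can offer exactly $N$ working VMs in scenario $\sigma$ (with the same bandwidth allocation $\mathcal{B}_s$).
   Context: $T=(V,L)$ is a rooted tree whose leaves form the set $H$ of physical machines (PMs) and whose internal nodes are switches; for a node $u$, $T_u$ is the subtree rooted at $u$ and $l_u$ is the link from $u$ to its parent. A request is $\mathcal{J}=\langle N,B\rangle$ with $N$ a positive integer and $B\ge0$. An allocation is a pair $(\mathcal{C}_s,\mathcal{B}_s)$ with $\mathcal{C}_s:H\to\mathbb{Z}_{\ge0}$ and $\mathcal{B}_s:L\to\mathbb{R}_{\ge0}$. A scenario is either "no failure" or the failure of a single PM $F\in H$. The subtree $T_v$ can offer $n$ working VMs in a scenario if there is an assignment $w:H\cap T_v\to\mathbb{Z}_{\ge0}$ with $w(h)\le\mathcal{C}_s(h)$ for all $h$, $w(F)=0$ if $F$ is the failed PM, $\sum_{h\in H\cap T_v}w(h)=n$, and for every node $u$ of $T_v$ (including $u=v$, whenever $l_u$ exists) $\min\{n_u,N-n_u\}\cdot B\le\mathcal{B}_s(l_u)$, where $n_u=\sum_{h\in H\cap T_u}w(h)$. *)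

theory Defs
  imports Complex_Main
begin

text \<open>The link l_u from u to its parent is identified with the
(non-root) node u, so a bandwidth allocation is a function on nodes, relevant
only on V - {r}.\<close>

definition rooted_tree :: "'a set \<Rightarrow> 'a \<Rightarrow> ('a \<Rightarrow> 'a) \<Rightarrow> bool" where
  "rooted_tree V r par \<longleftrightarrow> finite V \<and> r \<in> V \<and>
     (\<forall>u \<in> V - {r}. par u \<in> V) \<and>
     (\<forall>u \<in> V. \<exists>k. (par ^^ k) u = r)"

definition subtree :: "'a set \<Rightarrow> 'a \<Rightarrow> ('a \<Rightarrow> 'a) \<Rightarrow> 'a \<Rightarrow> 'a set" where
  "subtree V r par v = {u \<in> V. \<exists>k. (\<forall>i<k. (par ^^ i) u \<noteq> r) \<and> (par ^^ k) u = v}"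

text \<open>Leaves (physical machines): nodes that are nobody's parent.\<close>
definition leaves :: "'a set \<Rightarrow> 'a \<Rightarrow> ('a \<Rightarrow> 'a) \<Rightarrow> 'a set" where
  "leaves V r par = {h \<in> V. \<not> (\<exists>u \<in> V - {r}. par u = h)}"

text \<open>Scenario: None = no failure, Some F = failure of PM F.
  can_offer V r par N B Cs Bs v \<sigma> n: the subtree T_v can offer n working VMs.\<close>
definition can_offer ::
  "'a set \<Rightarrow> 'a \<Rightarrow> ('a \<Rightarrow> 'a) \<Rightarrow> nat \<Rightarrow> real \<Rightarrow> ('a \<Rightarrow> nat) \<Rightarrow> ('a \<Rightarrow> real)
   \<Rightarrow> 'a \<Rightarrow> 'a option \<Rightarrow> nat \<Rightarrow> bool" where
  "can_offer V r par N B Cs Bs v \<sigma> n \<longleftrightarrow>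
     (\<exists>w :: 'a \<Rightarrow> nat.
        (\<forall>h \<in> leaves V r par \<inter> subtree V r par v. w h \<le> Cs h) \<and>
        (\<forall>F. \<sigma> = Some F \<longrightarrow> F \<in> leaves V r par \<inter> subtree V r par v \<longrightarrow> w F = 0) \<and>
        (\<Sum>h \<in> leaves V r par \<inter> subtree V r par v. w h) = n \<and>
        (\<forall>u \<in> subtree V r par v. u \<noteq> r \<longrightarrow>
           (let nu = (\<Sum>h \<in> leaves V r par \<inter> subtree V r par u. w h) in
              min (real nu) (real N - real nu) * B \<le> Bs u)))"

end

theory Submission
  imports Defs
begin

definition gg :: "nat \<Rightarrow> nat \<Rightarrow> int" where
  "gg N x = min (int x) (int N - int x)"

lemma exists_sub:
  assumes "finite P" "k \<le> sum w P"
  shows "\<exists>w'. (\<forall>x\<in>P. w' x \<le> w x) \<and> sum w' P = (k::nat)"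
  using assms
proof (induction P arbitrary: k rule: finite_induct)
  case empty
  then show ?case by auto
next
  case (insert x P)
  show ?case
  proof (cases "k \<le> sum w P")
    case True
    from insert.IH[OF True] obtain w1 where w1: "\<forall>y\<in>P. w1 y \<le> w y" "sum w1 P = k" by blast
    have "sum (w1(x:=0)) P = sum w1 P" using insert.hyps by (intro sum.cong) auto
    then show ?thesis using w1 insert.hyps
      by (intro exI[of _ "w1(x:=0)"]) auto
  next
    case False
    have "sum (w(x:= k - sum w P)) P = sum w P" using insert.hyps by (intro sum.cong) auto
    then show ?thesis using False insert.hyps insert.prems
      by (intro exI[of _ "w(x:= k - sum w P)"]) auto
  qed
qed

lemma gg_le: "(a'::nat) \<le> a \<Longrightarrow> a' \<le> k - m \<Longrightarrow> a \<le> m \<Longrightarrow> k \<le> N \<Longrightarrow> \<not> k \<le> m \<Longrightarrow> gg N a' \<le> gg N a"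
  unfolding gg_def by linarith

lemma lam:
  "card F = n \<Longrightarrow> finite P \<Longrightarrow> F \<subseteq> Pow P \<Longrightarrow>
   (\<forall>A\<in>F. \<forall>B\<in>F. A \<subseteq> B \<or> B \<subseteq> A \<or> A \<inter> B = {}) \<Longrightarrow> k \<le> N \<Longrightarrow> k \<le> sum w P \<Longrightarrow>
   \<exists>w'. (\<forall>x\<in>P. w' x \<le> w x) \<and> sum w' P = k \<and>
     (\<forall>A\<in>F. sum w' A = sum w A \<or> gg N (sum w' A) \<le> gg N (sum w A) \<or> gg N (sum w' A) \<le> gg N k)"
proof (induction n arbitrary: F P k rule: less_induct)
  case (less n)
  note prems = less.prems
  have finF: "finite F" using prems(2,3) by (meson finite_Pow_iff finite_subset)
  show ?case
  proof (cases "F = {}")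
    case True
    then show ?thesis using exists_sub[OF prems(2,6)] by auto
  next
    case False
    define m where "m = Max ((\<lambda>A. sum w A) ` F)"
    define F' where "F' = {A\<in>F. sum w A = m}"
    have mle: "\<forall>A\<in>F. sum w A \<le> m" unfolding m_def using finF by auto
    have "m \<in> (\<lambda>A. sum w A) ` F" unfolding m_def using finF False by (intro Max_in) auto
    then have F'ne: "F' \<noteq> {}" unfolding F'_def by auto
    have finF': "finite F'" unfolding F'_def using finF by auto
    define c where "c = Max (card ` F')"
    have "c \<in> card ` F'" unfolding c_def using finF' F'ne by (intro Max_in) auto
    then obtain M where MF': "M \<in> F'" and cM: "card M = c" by auto
    have MF: "M \<in> F" and Mm: "sum w M = m" using MF' unfolding F'_def by auto
    have MP: "M \<subseteq> P" using MF prems(3) by auto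
    have Mmax: "\<forall>A\<in>F. M \<subseteq> A \<longrightarrow> A = M"
    proof (intro ballI impI)
      fix A assume AF: "A \<in> F" and MA: "M \<subseteq> A"
      have AP: "A \<subseteq> P" using AF prems(3) by blast
      have finA: "finite A" using AP prems(2) finite_subset by blast
      have "sum w M \<le> sum w A" using MA finA by (simp add: sum_mono2)
      moreover have "sum w A \<le> m" using mle AF by blast
      ultimately have "sum w A = m" using Mm by linarith
      then have "A \<in> F'" unfolding F'_def using AF by auto
      then have "card A \<le> card M" unfolding cM c_def using finF' by (simp add: Max_ge)
      then have "card M = card A" using card_mono[OF finA MA] by linarith
      then have "M = A" by (rule card_subset_eq[OF finA MA])
      then show "A = M" by (rule sym)
    qed
    have split: "\<forall>A\<in>F. A \<subseteq> M \<or> A \<inter> M = {}"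
    proof
      fix A assume AF: "A \<in> F"
      then have "A \<subseteq> M \<or> M \<subseteq> A \<or> A \<inter> M = {}" using prems(4) MF by simp
      then show "A \<subseteq> M \<or> A \<inter> M = {}" using Mmax AF by blast
    qed
    have finM: "finite M" using MP prems(2) finite_subset by blast
    show ?thesis
    proof (cases "k \<le> m")
      case True
      define F1 where "F1 = {A\<in>F. A \<subset> M}"
      have "F1 \<subseteq> F" "M \<notin> F1" unfolding F1_def by auto
      then have cF1: "card F1 < n" using prems(1) MF finF by (metis psubset_card_mono psubset_eq subset_eq)
      have "\<exists>w'. (\<forall>x\<in>M. w' x \<le> w x) \<and> sum w' M = k \<and>
         (\<forall>A\<in>F1. sum w' A = sum w A \<or> gg N (sum w' A) \<le> gg N (sum w A) \<or> gg N (sum w' A) \<le> gg N k)"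
        apply (rule less.IH[OF cF1 refl finM])
        using prems(4,5) True Mm unfolding F1_def by auto
      then obtain w1 where w1: "\<forall>x\<in>M. w1 x \<le> w x" "sum w1 M = k"
        "\<forall>A\<in>F1. sum w1 A = sum w A \<or> gg N (sum w1 A) \<le> gg N (sum w A) \<or> gg N (sum w1 A) \<le> gg N k"
        by blast
      define w' where "w' = (\<lambda>x. if x \<in> M then w1 x else 0)"
      have sumsub: "sum w' A = sum w1 A" if "A \<subseteq> M" for A
        using that unfolding w'_def by (intro sum.cong) auto
      have sumdis: "sum w' A = 0" if "A \<inter> M = {}" for A
        using that unfolding w'_def by (intro sum.neutral) auto
      have "sum w' P = sum w' (P - M) + sum w' M" using MP prems(2) by (metis sum.subset_diff)
      also have "\<dots> = k" using sumsub[of M] sumdis[of "P - M"] w1(2) by auto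
      finally have sP: "sum w' P = k" .
      have g0: "gg N 0 \<le> gg N k" using prems(5) unfolding gg_def by auto
      show ?thesis
      proof (intro exI[of _ w'] conjI ballI)
        fix x assume "x \<in> P" then show "w' x \<le> w x" using w1(1) unfolding w'_def by auto
      next
        show "sum w' P = k" by (rule sP)
      next
        fix A assume AF: "A \<in> F"
        show "sum w' A = sum w A \<or> gg N (sum w' A) \<le> gg N (sum w A) \<or> gg N (sum w' A) \<le> gg N k"
        proof (cases "A \<subseteq> M")
          case True
          show ?thesis
          proof (cases "A = M")
            case True then show ?thesis using sumsub w1(2) by auto
          next
            case False
            then have "A \<in> F1" using True AF unfolding F1_def by auto
            then show ?thesis using w1(3) sumsub[OF True] by auto
          qed
        next
          case False
          then have "A \<inter> M = {}" using split AF by auto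
          then show ?thesis using sumdis g0 by auto
        qed
      qed
    next
      case False
      define F2 where "F2 = {A\<in>F. A \<noteq> M \<and> A \<inter> M = {}}"
      have "F2 \<subseteq> F" "M \<notin> F2" unfolding F2_def by auto
      then have cF2: "card F2 < n" using prems(1) MF finF by (metis psubset_card_mono psubset_eq subset_eq)
      have finPM: "finite (P - M)" using prems(2) by auto
      have sPw: "sum w P = sum w (P - M) + sum w M" using MP prems(2) by (metis sum.subset_diff)
      have "\<exists>w'. (\<forall>x\<in>P - M. w' x \<le> w x) \<and> sum w' (P - M) = k - m \<and>
         (\<forall>A\<in>F2. sum w' A = sum w A \<or> gg N (sum w' A) \<le> gg N (sum w A) \<or> gg N (sum w' A) \<le> gg N (k - m))"
        apply (rule less.IH[OF cF2 refl finPM])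
        using prems(3,4,5,6) sPw Mm unfolding F2_def by auto
      then obtain w2 where w2: "\<forall>x\<in>P - M. w2 x \<le> w x" "sum w2 (P - M) = k - m"
        by blast
      define w' where "w' = (\<lambda>x. if x \<in> M then w x else w2 x)"
      have sumsub: "sum w' A = sum w A" if "A \<subseteq> M" for A
        using that unfolding w'_def by (intro sum.cong) auto
      have sumdis: "sum w' A = sum w2 A" if "A \<inter> M = {}" for A
        using that unfolding w'_def by (intro sum.cong) auto
      have "sum w' P = sum w' (P - M) + sum w' M" using MP prems(2) by (metis sum.subset_diff)
      also have "\<dots> = k"
      proof -
        have e1: "sum w' (P - M) = k - m" using sumdis[of "P - M"] w2(2) by auto
        have e2: "sum w' M = m" using sumsub[of M] Mm by simp
        show ?thesis using e1 e2 False by linarith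
      qed
      finally have sP: "sum w' P = k" .
      show ?thesis
      proof (intro exI[of _ w'] conjI ballI)
        fix x assume "x \<in> P" then show "w' x \<le> w x" using w2(1) unfolding w'_def by auto
      next
        show "sum w' P = k" by (rule sP)
      next
        fix A assume AF: "A \<in> F"
        show "sum w' A = sum w A \<or> gg N (sum w' A) \<le> gg N (sum w A) \<or> gg N (sum w' A) \<le> gg N k"
        proof (cases "A \<subseteq> M")
          case True
          then show ?thesis using sumsub by auto
        next
          case nsub: False
          then have dis: "A \<inter> M = {}" using split AF by auto
          have APM: "A \<subseteq> P - M" using dis AF prems(3) by auto
          have finA: "finite A" using APM finPM finite_subset by blast
          have a1: "sum w2 A \<le> sum w A" using APM w2(1) by (intro sum_mono) auto
          have a2: "sum w2 A \<le> k - m" using APM finPM w2(2) by (metis sum_mono2 zero_le)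
          have a3: "sum w A \<le> m" using mle AF by auto
          have "gg N (sum w2 A) \<le> gg N (sum w A)"
            using gg_le[OF a1 a2 a3 prems(5) False] .
          then show ?thesis using sumdis[OF dis] by auto
        qed
      qed
    qed
  qed
qed


lemma sub_V: "subtree V r par v \<subseteq> V" by (auto simp: subtree_def)

lemma sub_trans:
  assumes "u \<in> subtree V r par v"
  shows "subtree V r par u \<subseteq> subtree V r par v"
proof
  fix x assume "x \<in> subtree V r par u"
  then obtain j where xV: "x \<in> V" and j1: "\<forall>i<j. (par ^^ i) x \<noteq> r" and j2: "(par ^^ j) x = u"
    by (auto simp: subtree_def)
  from assms obtain d where d1: "\<forall>i<d. (par ^^ i) u \<noteq> r" and d2: "(par ^^ d) u = v"
    by (auto simp: subtree_def)
  have e: "(par ^^ (d + j)) x = v" using j2 d2 by (simp add: funpow_add)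
  have a: "(par ^^ i) x \<noteq> r" if "i < d + j" for i
  proof (cases "i < j")
    case True then show ?thesis using j1 by auto
  next
    case False
    then have "(par ^^ i) x = (par ^^ (i - j)) ((par ^^ j) x)"
      by (metis funpow_add le_add_diff_inverse2 not_less o_apply)
    then show ?thesis using d1 j2 that False by auto
  qed
  show "x \<in> subtree V r par v" unfolding subtree_def using xV e a by blast
qed

lemma sub_up:
  assumes "u1 \<in> V" "k1 \<le> k2" "\<forall>i<k2. (par ^^ i) h \<noteq> r" "(par ^^ k1) h = u1" "(par ^^ k2) h = u2"
  shows "u1 \<in> subtree V r par u2"
proof -
  have "(par ^^ (k2 - k1)) u1 = u2" using assms(2,4,5)
    by (metis funpow_add le_add_diff_inverse2 o_apply)
  moreover have "\<forall>i<k2 - k1. (par ^^ i) u1 \<noteq> r"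
  proof (intro allI impI)
    fix i assume "i < k2 - k1"
    moreover have "(par ^^ i) u1 = (par ^^ (i + k1)) h" using assms(4) by (simp add: funpow_add)
    ultimately show "(par ^^ i) u1 \<noteq> r" using assms(3) by auto
  qed
  ultimately show ?thesis unfolding subtree_def using assms(1) by blast
qed

lemma sub_lam:
  assumes "u1 \<in> V" "u2 \<in> V" "h \<in> subtree V r par u1" "h \<in> subtree V r par u2"
  shows "subtree V r par u1 \<subseteq> subtree V r par u2 \<or> subtree V r par u2 \<subseteq> subtree V r par u1"
proof -
  obtain k1 where k1: "\<forall>i<k1. (par ^^ i) h \<noteq> r" "(par ^^ k1) h = u1"
    using assms(3) by (auto simp: subtree_def)
  obtain k2 where k2: "\<forall>i<k2. (par ^^ i) h \<noteq> r" "(par ^^ k2) h = u2"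
    using assms(4) by (auto simp: subtree_def)
  show ?thesis
  proof (cases "k1 \<le> k2")
    case True
    have "u1 \<in> subtree V r par u2" using sub_up[OF assms(1) True k2(1) k1(2) k2(2)] .
    then show ?thesis using sub_trans[of _ V r par] by blast
  next
    case False
    then have "k2 \<le> k1" by simp
    then have "u2 \<in> subtree V r par u1" using sub_up[OF assms(2) _ k1(1) k2(2) k1(2)] by blast
    then show ?thesis using sub_trans[of _ V r par] by blast
  qed
qed

lemma gg_real: "real_of_int (gg N x) = min (real x) (real N - real x)"
  unfolding gg_def by (simp add: min_def)

theorem lemma2:
  fixes V :: "'a set" and r :: 'a and par :: "'a \<Rightarrow> 'a"
    and N :: nat and B :: real and Cs :: "'a \<Rightarrow> nat" and Bs :: "'a \<Rightarrow> real"
    and v :: 'a and \<sigma> :: "'a option"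
  assumes "rooted_tree V r par"
    and "N > 0" and "B \<ge> 0"
    and "\<forall>u \<in> V - {r}. Bs u \<ge> 0"
    and "v \<in> V"
    and "\<forall>F. \<sigma> = Some F \<longrightarrow> F \<in> leaves V r par"
    and "\<exists>n > N. can_offer V r par N B Cs Bs v \<sigma> n"
  shows "can_offer V r par N B Cs Bs v \<sigma> N"
proof -
  define L where "L u = leaves V r par \<inter> subtree V r par u" for u
  obtain n w where nN: "n > N" and
    w1: "\<forall>h \<in> L v. w h \<le> Cs h" and
    w2: "\<forall>F. \<sigma> = Some F \<longrightarrow> F \<in> L v \<longrightarrow> w F = 0" and
    w3: "sum w (L v) = n" and
    w4: "\<forall>u \<in> subtree V r par v. u \<noteq> r \<longrightarrow>
           min (real (sum w (L u))) (real N - real (sum w (L u))) * B \<le> Bs u"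
    using assms(7) unfolding can_offer_def L_def Let_def by blast
  have finV: "finite V" using assms(1) unfolding rooted_tree_def by blast
  have finP: "finite (L v)" unfolding L_def using finV sub_V
    by (meson finite_Int finite_subset)
  have FP: "L ` subtree V r par v \<subseteq> Pow (L v)"
    unfolding L_def using sub_trans by fastforce
  have lamF: "\<forall>A\<in>L ` subtree V r par v. \<forall>B\<in>L ` subtree V r par v. A \<subseteq> B \<or> B \<subseteq> A \<or> A \<inter> B = {}"
  proof (intro ballI)
    fix A B assume "A \<in> L ` subtree V r par v" "B \<in> L ` subtree V r par v"
    then obtain u1 u2 where u: "u1 \<in> subtree V r par v" "u2 \<in> subtree V r par v" "A = L u1" "B = L u2"
      by blast
    have uV: "u1 \<in> V" "u2 \<in> V" using u sub_V[of V r par v] by auto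
    show "A \<subseteq> B \<or> B \<subseteq> A \<or> A \<inter> B = {}"
    proof (cases "A \<inter> B = {}")
      case False
      then obtain h where "h \<in> subtree V r par u1" "h \<in> subtree V r par u2"
        using u unfolding L_def by blast
      from sub_lam[OF uV this] show ?thesis using u unfolding L_def by blast
    qed simp
  qed
  obtain w' where w'1: "\<forall>x\<in>L v. w' x \<le> w x" and w'2: "sum w' (L v) = N" and
    w'3: "\<forall>A\<in>L ` subtree V r par v. sum w' A = sum w A \<or> gg N (sum w' A) \<le> gg N (sum w A) \<or> gg N (sum w' A) \<le> gg N N"
  proof -
    have "N \<le> sum w (L v)" using w3 nN by simp
    from lam[OF refl finP FP lamF order.refl this] show ?thesis using that by blast
  qed
  have con: "min (real (sum w' (L u))) (real N - real (sum w' (L u))) * B \<le> Bs u"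
    if uS: "u \<in> subtree V r par v" and ur: "u \<noteq> r" for u
  proof -
    have "u \<in> V" using uS sub_V[of V r par v] by blast
    then have Bs0: "Bs u \<ge> 0" using assms(4) ur by simp
    have old: "real_of_int (gg N (sum w (L u))) * B \<le> Bs u" unfolding gg_real using w4 uS ur by blast
    have "L u \<in> L ` subtree V r par v" using uS by (rule imageI)
    then have "sum w' (L u) = sum w (L u) \<or> gg N (sum w' (L u)) \<le> gg N (sum w (L u))
      \<or> gg N (sum w' (L u)) \<le> gg N N" by (rule bspec[OF w'3])
    then consider "sum w' (L u) = sum w (L u)" | "gg N (sum w' (L u)) \<le> gg N (sum w (L u))"
      | "gg N (sum w' (L u)) \<le> gg N N" by argo
    then have "real_of_int (gg N (sum w' (L u))) * B \<le> Bs u"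
    proof cases
      case 1 then show ?thesis using old by simp
    next
      case 2
      then have "real_of_int (gg N (sum w' (L u))) * B \<le> real_of_int (gg N (sum w (L u))) * B"
        using assms(3) by (intro mult_right_mono) simp_all
      then show ?thesis using old by linarith
    next
      case 3
      moreover have "gg N N = 0" unfolding gg_def by simp
      ultimately have "gg N (sum w' (L u)) \<le> 0" by linarith
      then have "real_of_int (gg N (sum w' (L u))) * B \<le> 0"
        using assms(3) by (simp add: mult_nonpos_nonneg)
      then show ?thesis using Bs0 by linarith
    qed
    then show ?thesis by (simp only: gg_real)
  qed
  show ?thesis
    unfolding can_offer_def Let_def
  proof (intro exI[of _ w'] conjI)
    show "\<forall>h\<in>leaves V r par \<inter> subtree V r par v. w' h \<le> Cs h"
      using w'1 w1 unfolding L_def using le_trans by blast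
    show "\<forall>F. \<sigma> = Some F \<longrightarrow> F \<in> leaves V r par \<inter> subtree V r par v \<longrightarrow> w' F = 0"
    proof (intro allI impI)
      fix F assume "\<sigma> = Some F" "F \<in> leaves V r par \<inter> subtree V r par v"
      then have "w F = 0" "w' F \<le> w F" using w2 w'1 unfolding L_def by blast+
      then show "w' F = 0" by simp
    qed
    show "sum w' (leaves V r par \<inter> subtree V r par v) = N" using w'2 unfolding L_def .
    show "\<forall>u\<in>subtree V r par v. u \<noteq> r \<longrightarrow>
        min (real (sum w' (leaves V r par \<inter> subtree V r par u)))
            (real N - real (sum w' (leaves V r par \<inter> subtree V r par u))) * B \<le> Bs u"
      using con unfolding L_def by blast
  qed
qed

end
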